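(* Let $G$ be a connected graph, let $u,v\in V(G)$, and let $u=w_0,w_1,\dots,w_k=v$ with $k\geq 2$ be an internal path between $u$ and $v$, i.e. $w_iw_{i+1}\in E(G)$ for $0\le i\le k-1$ and each of $w_1,\dots,w_{k-1}$ has degree two in $G$. Let $H=G-w_1-\dots-w_{k-1}$ be the graph obtained by deleting $w_1,\dots,w_{k-1}$ from $G$. Then the sequence $Tr_G(w_0),Tr_G(w_1),\dots,Tr_G(w_k)$ is unimodal if $H$ is connected, and inversely unimodal if $H$ is disconnected.
   Context: $Tr_G(x)=\sum_{y\in V(G)} d_G(x,y)$ is the transmission of $x$, where $d_G$ is the shortest-path distance. A sequence $s_1,\dots,s_m$ is unimodal if there is $t\in\{1,\dots,m\}$ with $s_1\le\dots\le s_t\ge s_{t+1}\ge\dots\ge s_m$, and inversely unimodal if there is $t$ with $s_1\ge\dots\ge s_t\le s_{t+1}\le\dots\le s_m$. *)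

theory Defs
  imports Main
begin

definition simple_graph :: "'a set \<Rightarrow> ('a \<Rightarrow> 'a \<Rightarrow> bool) \<Rightarrow> bool" where
  "simple_graph V E \<longleftrightarrow> finite V \<and> (\<forall>x y. E x y \<longrightarrow> x \<in> V \<and> y \<in> V)
     \<and> (\<forall>x y. E x y \<longrightarrow> E y x) \<and> (\<forall>x. \<not> E x x)"

definition is_walk :: "'a set \<Rightarrow> ('a \<Rightarrow> 'a \<Rightarrow> bool) \<Rightarrow> 'a list \<Rightarrow> bool" where
  "is_walk V E xs \<longleftrightarrow> xs \<noteq> [] \<and> set xs \<subseteq> V \<and>
     (\<forall>i. i + 1 < length xs \<longrightarrow> E (xs ! i) (xs ! (i + 1)))"

definition reachable :: "'a set \<Rightarrow> ('a \<Rightarrow> 'a \<Rightarrow> bool) \<Rightarrow> 'a \<Rightarrow> 'a \<Rightarrow> bool" where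
  "reachable V E x y \<longleftrightarrow> (\<exists>xs. is_walk V E xs \<and> hd xs = x \<and> last xs = y)"

definition graph_connected :: "'a set \<Rightarrow> ('a \<Rightarrow> 'a \<Rightarrow> bool) \<Rightarrow> bool" where
  "graph_connected V E \<longleftrightarrow> V \<noteq> {} \<and> (\<forall>x\<in>V. \<forall>y\<in>V. reachable V E x y)"

definition gdist :: "'a set \<Rightarrow> ('a \<Rightarrow> 'a \<Rightarrow> bool) \<Rightarrow> 'a \<Rightarrow> 'a \<Rightarrow> nat" where
  "gdist V E x y = (LEAST n. \<exists>xs. is_walk V E xs \<and> hd xs = x \<and> last xs = y \<and> length xs = n + 1)"

definition transmission :: "'a set \<Rightarrow> ('a \<Rightarrow> 'a \<Rightarrow> bool) \<Rightarrow> 'a \<Rightarrow> nat" where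
  "transmission V E x = (\<Sum>y\<in>V. gdist V E x y)"

definition degree :: "'a set \<Rightarrow> ('a \<Rightarrow> 'a \<Rightarrow> bool) \<Rightarrow> 'a \<Rightarrow> nat" where
  "degree V E x = card {y\<in>V. E x y}"

definition del_vertices_edges :: "('a \<Rightarrow> 'a \<Rightarrow> bool) \<Rightarrow> 'a set \<Rightarrow> 'a \<Rightarrow> 'a \<Rightarrow> bool" where
  "del_vertices_edges E W = (\<lambda>x y. E x y \<and> x \<notin> W \<and> y \<notin> W)"

definition unimodal :: "(nat \<Rightarrow> 'b::linorder) \<Rightarrow> nat \<Rightarrow> bool" where
  "unimodal s k \<longleftrightarrow> (\<exists>t\<le>k. (\<forall>i j. i \<le> j \<and> j \<le> t \<longrightarrow> s i \<le> s j) \<and>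
                              (\<forall>i j. t \<le> i \<and> i \<le> j \<and> j \<le> k \<longrightarrow> s j \<le> s i))"

definition inv_unimodal :: "(nat \<Rightarrow> 'b::linorder) \<Rightarrow> nat \<Rightarrow> bool" where
  "inv_unimodal s k \<longleftrightarrow> (\<exists>t\<le>k. (\<forall>i j. i \<le> j \<and> j \<le> t \<longrightarrow> s j \<le> s i) \<and>
                              (\<forall>i j. t \<le> i \<and> i \<le> j \<and> j \<le> k \<longrightarrow> s i \<le> s j))"

end

theory Submission
  imports Defs
begin

lemma walk_single[simp]: "is_walk V E [x] \<longleftrightarrow> x \<in> V"
  by (simp add: is_walk_def)

lemma walk_cons2[simp]: "is_walk V E (x#y#xs) \<longleftrightarrow> x \<in> V \<and> E x y \<and> is_walk V E (y#xs)"
proof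
  assume a: "is_walk V E (x#y#xs)"
  have "\<forall>i. i + 1 < length (y#xs) \<longrightarrow> E ((y#xs) ! i) ((y#xs) ! (i + 1))"
  proof (intro allI impI)
    fix i assume "i + 1 < length (y#xs)"
    then have "Suc i + 1 < length (x#y#xs)" by simp
    then have "E ((x#y#xs) ! Suc i) ((x#y#xs) ! (Suc i + 1))" using a by (simp only: is_walk_def)
    then show "E ((y#xs) ! i) ((y#xs) ! (i + 1))" by simp
  qed
  moreover have "E x y" using a unfolding is_walk_def by (metis One_nat_def add_0 length_Cons less_Suc_eq_0_disj less_add_Suc1 nth_Cons_0 nth_Cons_Suc plus_1_eq_Suc)
  ultimately show "x \<in> V \<and> E x y \<and> is_walk V E (y#xs)" using a unfolding is_walk_def by auto
next
  assume a: "x \<in> V \<and> E x y \<and> is_walk V E (y#xs)"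
  show "is_walk V E (x#y#xs)" unfolding is_walk_def
  proof (intro conjI allI impI)
    fix i assume i: "i + 1 < length (x#y#xs)"
    show "E ((x#y#xs) ! i) ((x#y#xs) ! (i + 1))"
    proof (cases i)
      case 0 then show ?thesis using a by simp
    next
      case (Suc j)
      then have "j + 1 < length (y#xs)" using i by simp
      then have "E ((y#xs) ! j) ((y#xs) ! (j + 1))" using a unfolding is_walk_def by blast
      then show ?thesis using Suc by simp
    qed
  qed (use a in \<open>auto simp: is_walk_def\<close>)
qed

lemma walk_nonempty: "is_walk V E xs \<Longrightarrow> xs \<noteq> []" by (simp add: is_walk_def)
lemma walk_set: "is_walk V E xs \<Longrightarrow> set xs \<subseteq> V" by (simp add: is_walk_def)

lemma walk_append:
  "xs \<noteq> [] \<Longrightarrow> ys \<noteq> [] \<Longrightarrow>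
   is_walk V E (xs @ ys) \<longleftrightarrow> is_walk V E xs \<and> is_walk V E ys \<and> E (last xs) (hd ys)"
proof (induction xs)
  case Nil then show ?case by simp
next
  case (Cons x xs)
  show ?case
  proof (cases xs)
    case Nil
    then show ?thesis using Cons.prems by (cases ys) auto
  next
    case (Cons x' xs')
    then show ?thesis using Cons.IH Cons.prems by auto
  qed
qed

lemma walk_rev:
  assumes "\<forall>x y. E x y \<longrightarrow> E y x" "is_walk V E xs"
  shows "is_walk V E (rev xs)"
  using assms(2)
proof (induction xs)
  case Nil then show ?case by (simp add: is_walk_def)
next
  case (Cons x xs)
  show ?case
  proof (cases xs)
    case Nil then show ?thesis using Cons by simp
  next
    case (Cons y ys)
    have w: "is_walk V E xs" "x \<in> V" "E x y" using Cons \<open>is_walk V E (x#xs)\<close> by auto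
    have "is_walk V E (rev xs @ [x])"
      using walk_append[of "rev xs" "[x]" V E] Cons.IH[OF w(1)] w assms(1) \<open>xs = y#ys\<close>
      by (simp add: last_rev)
    then show ?thesis by simp
  qed
qed

lemma walk_prop:
  assumes "is_walk V E xs" "P (hd xs)" "\<forall>x y. P x \<longrightarrow> E x y \<longrightarrow> y \<in> set xs \<longrightarrow> P y"
  shows "P (last xs)"
  using assms
proof (induction xs)
  case Nil then show ?case by (simp add: is_walk_def)
next
  case (Cons x xs)
  show ?case
  proof (cases xs)
    case Nil then show ?thesis using Cons.prems(2) by simp
  next
    case (Cons y ys)
    have w: "is_walk V E (x#y#ys)" using Cons.prems(1) \<open>xs = y#ys\<close> by simp
    then have e: "E x y" and wy: "is_walk V E (y#ys)" by simp_all
    have px: "P x" using Cons.prems(2) by simp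
    have cl: "\<forall>a b. P a \<longrightarrow> E a b \<longrightarrow> b \<in> set (x#xs) \<longrightarrow> P b" using Cons.prems(3) .
    have py: "P y" using cl px e \<open>xs = y#ys\<close> by simp
    have cl2: "\<forall>a b. P a \<longrightarrow> E a b \<longrightarrow> b \<in> set xs \<longrightarrow> P b" using cl by simp
    have "P (last xs)" using Cons.IH[OF _ _ cl2] wy py \<open>xs = y#ys\<close> by simp
    then show ?thesis using \<open>xs = y#ys\<close> by simp
  qed
qed

lemma walk_concat:
  assumes "is_walk V E xs" "is_walk V E ys" "last xs = hd ys"
  shows "is_walk V E (xs @ tl ys) \<and> hd (xs @ tl ys) = hd xs \<and> last (xs @ tl ys) = last ys
         \<and> length (xs @ tl ys) + 1 = length xs + length ys"
proof (cases ys)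
  case Nil then show ?thesis using assms by (simp add: is_walk_def)
next
  case (Cons y ys')
  show ?thesis
  proof (cases ys')
    case Nil then show ?thesis using assms Cons by (simp add: is_walk_def)
  next
    case (Cons z zs)
    have "is_walk V E ys'" "E y z" using assms(2) \<open>ys = y#ys'\<close> Cons by auto
    then have "is_walk V E (xs @ ys')" using walk_append[of xs ys' V E] assms Cons \<open>ys = y#ys'\<close>
      walk_nonempty[OF assms(1)] by simp
    then show ?thesis using \<open>ys = y#ys'\<close> Cons walk_nonempty[OF assms(1)] by simp
  qed
qed

lemma reach_refl: "x \<in> V \<Longrightarrow> reachable V E x x"
  unfolding reachable_def by (rule exI[of _ "[x]"]) simp

lemma reach_sym: "\<forall>x y. E x y \<longrightarrow> E y x \<Longrightarrow> reachable V E x y \<Longrightarrow> reachable V E y x"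
  unfolding reachable_def
  by (metis walk_rev walk_nonempty hd_rev last_rev)

lemma reach_trans: "reachable V E x y \<Longrightarrow> reachable V E y z \<Longrightarrow> reachable V E x z"
  unfolding reachable_def by (metis walk_concat)

lemma reach_step: "reachable V E x y \<Longrightarrow> E y z \<Longrightarrow> z \<in> V \<Longrightarrow> reachable V E x z"
proof -
  assume a: "reachable V E x y" "E y z" "z \<in> V"
  have "y \<in> V" using a(1) unfolding reachable_def by (metis walk_set last_in_set walk_nonempty subsetD)
  then have "reachable V E y z" unfolding reachable_def using a
    by (intro exI[of _ "[y,z]"]) simp
  then show ?thesis using a reach_trans by metis
qed

lemma sg_sym: "simple_graph V E \<Longrightarrow> E x y \<Longrightarrow> E y x" by (simp add: simple_graph_def)
lemma sg_V: "simple_graph V E \<Longrightarrow> E x y \<Longrightarrow> x \<in> V \<and> y \<in> V" by (simp add: simple_graph_def)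
lemma sg_irr: "simple_graph V E \<Longrightarrow> \<not> E x x" by (simp add: simple_graph_def)

lemma conn_reach: "graph_connected V E \<Longrightarrow> x \<in> V \<Longrightarrow> y \<in> V \<Longrightarrow> reachable V E x y"
  by (simp add: graph_connected_def)

lemma gdist_walk:
  assumes "reachable V E x y"
  shows "\<exists>xs. is_walk V E xs \<and> hd xs = x \<and> last xs = y \<and> length xs = gdist V E x y + 1"
proof -
  obtain xs where xs: "is_walk V E xs" "hd xs = x" "last xs = y"
    using assms unfolding reachable_def by blast
  then have "\<exists>n xs. is_walk V E xs \<and> hd xs = x \<and> last xs = y \<and> length xs = n + 1"
    by (intro exI[of _ "length xs - 1"] exI[of _ xs]) (auto simp: is_walk_def)
  then show ?thesis unfolding gdist_def by (rule LeastI_ex)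
qed

lemma gdist_le:
  assumes "is_walk V E xs" "hd xs = x" "last xs = y"
  shows "gdist V E x y \<le> length xs - 1"
proof -
  have ne: "xs \<noteq> []" using assms(1) by (rule walk_nonempty)
  let ?P = "\<lambda>n. \<exists>xs. is_walk V E xs \<and> hd xs = x \<and> last xs = y \<and> length xs = n + 1"
  have eq: "length xs - 1 + 1 = length xs" using ne by simp
  have "?P (length xs - 1)" by (intro exI[of _ xs] conjI) (simp_all only: eq assms)
  then have "Least ?P \<le> length xs - 1" by (rule Least_le)
  then show ?thesis by (simp add: gdist_def)
qed

lemma gdist_refl: "x \<in> V \<Longrightarrow> gdist V E x x = 0"
  using gdist_le[of V E "[x]" x x] by simp

lemma gdist_edge: "simple_graph V E \<Longrightarrow> E x y \<Longrightarrow> gdist V E x y \<le> 1"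
  using gdist_le[of V E "[x,y]" x y] sg_V[of V E x y] by simp

lemma gdist_pos: "reachable V E x y \<Longrightarrow> x \<noteq> y \<Longrightarrow> gdist V E x y \<ge> 1"
proof (rule ccontr)
  assume a: "reachable V E x y" "x \<noteq> y" "\<not> gdist V E x y \<ge> 1"
  then obtain xs where "is_walk V E xs" "hd xs = x" "last xs = y" "length xs = 1"
    using gdist_walk[OF a(1)] by auto
  then show False using a(2) by (cases xs) auto
qed

lemma gdist_sym:
  assumes "simple_graph V E" "graph_connected V E" "x \<in> V" "y \<in> V"
  shows "gdist V E x y = gdist V E y x"
proof -
  have sym: "\<forall>x y. E x y \<longrightarrow> E y x" using assms(1) sg_sym by metis
  have *: "gdist V E b a \<le> gdist V E a b" if ab: "a \<in> V" "b \<in> V" for a b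
  proof -
    obtain xs where xs: "is_walk V E xs" "hd xs = a" "last xs = b" "length xs = gdist V E a b + 1"
      using gdist_walk[OF conn_reach[OF assms(2) ab]] by blast
    have "is_walk V E (rev xs)" using walk_rev[OF sym xs(1)] .
    moreover have "hd (rev xs) = b" "last (rev xs) = a" using xs walk_nonempty[OF xs(1)]
      by (auto simp: hd_rev last_rev)
    ultimately show ?thesis using gdist_le[of V E "rev xs" b a] xs(4) by simp
  qed
  show ?thesis using *[of x y] *[of y x] assms by simp
qed

lemma gdist_tri:
  assumes "graph_connected V E" "x \<in> V" "y \<in> V" "z \<in> V"
  shows "gdist V E x z \<le> gdist V E x y + gdist V E y z"
proof -
  obtain xs where xs: "is_walk V E xs" "hd xs = x" "last xs = y" "length xs = gdist V E x y + 1"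
    using gdist_walk[OF conn_reach[OF assms(1,2,3)]] by blast
  obtain ys where ys: "is_walk V E ys" "hd ys = y" "last ys = z" "length ys = gdist V E y z + 1"
    using gdist_walk[OF conn_reach[OF assms(1,3,4)]] by blast
  have c: "is_walk V E (xs @ tl ys) \<and> hd (xs @ tl ys) = hd xs \<and> last (xs @ tl ys) = last ys
         \<and> length (xs @ tl ys) + 1 = length xs + length ys"
    using walk_concat[OF xs(1) ys(1)] xs ys by simp
  then have w: "is_walk V E (xs @ tl ys)" and h: "hd (xs @ tl ys) = x" and l: "last (xs @ tl ys) = z"
    and len: "length (xs @ tl ys) + 1 = length xs + length ys" using xs(2) ys(3) by auto
  have "gdist V E x z \<le> length (xs @ tl ys) - 1" using gdist_le[OF w h l] .
  then show ?thesis using len xs(4) ys(4) by linarith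
qed

lemma gdist_step:
  assumes "simple_graph V E" "graph_connected V E" "x \<in> V" "y \<in> V" "x \<noteq> y"
  shows "\<exists>z. E x z \<and> gdist V E x y = gdist V E z y + 1"
proof -
  obtain xs where xs: "is_walk V E xs" "hd xs = x" "last xs = y" "length xs = gdist V E x y + 1"
    using gdist_walk[OF conn_reach[OF assms(2,3,4)]] by blast
  have pos: "gdist V E x y \<ge> 1" using gdist_pos[OF conn_reach[OF assms(2,3,4)] assms(5)] .
  have len2: "2 \<le> length xs" using pos xs(4) by linarith
  obtain a t where at: "xs = a # t" using len2 by (cases xs) auto
  obtain z r where zr: "t = z # r" using len2 at by (cases t) auto
  have xr: "xs = x # z # r" using at zr xs(2) by simp
  have e: "E x z" and wz: "is_walk V E (z#r)" using xs(1) xr by auto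
  have "gdist V E z y \<le> length (z#r) - 1"
    using gdist_le[OF wz, of z y] xs(3) xr by simp
  then have le1: "gdist V E z y + 1 \<le> gdist V E x y" using xs(4) xr by simp
  have zV: "z \<in> V" using sg_V[OF assms(1) e] by simp
  have "gdist V E x y \<le> gdist V E x z + gdist V E z y" using gdist_tri[OF assms(2,3) zV assms(4)] .
  then have "gdist V E x y \<le> gdist V E z y + 1" using gdist_edge[OF assms(1) e] by simp
  then show ?thesis using le1 e by (intro exI[of _ z]) simp
qed

lemma propagate:
  assumes sg: "simple_graph V E" and cn: "graph_connected V E"
    and aV: "a \<in> V" and cV: "c \<in> V" and Pa: "P a"
    and cl: "\<And>x y. P x \<Longrightarrow> E x y \<Longrightarrow> y \<noteq> c \<Longrightarrow> P y"
  shows "t \<in> V \<Longrightarrow> gdist V E a c + gdist V E c t > gdist V E a t \<Longrightarrow> P t"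
proof (induction "gdist V E a t" arbitrary: t rule: less_induct)
  case less
  show ?case
  proof (cases "t = a")
    case True then show ?thesis using Pa by simp
  next
    case False
    obtain z where z: "E t z" "gdist V E t a = gdist V E z a + 1"
      using gdist_step[OF sg cn less.prems(1) aV False] by blast
    have zV: "z \<in> V" using sg_V[OF sg z(1)] by simp
    have d1: "gdist V E a t = gdist V E a z + 1"
      using z(2) gdist_sym[OF sg cn aV less.prems(1)] gdist_sym[OF sg cn aV zV] by simp
    have "gdist V E c t \<le> gdist V E c z + gdist V E z t" using gdist_tri[OF cn cV zV less.prems(1)] .
    moreover have "gdist V E z t \<le> 1" using gdist_edge[OF sg sg_sym[OF sg z(1)]] .
    ultimately have "gdist V E a c + gdist V E c z > gdist V E a z" using less.prems(2) d1 by simp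
    then have Pz: "P z" using less.hyps[of z] d1 zV by simp
    have "t \<noteq> c" using less.prems(2) gdist_refl[OF cV, of E] by auto
    then show ?thesis using cl[OF Pz sg_sym[OF sg z(1)]] by simp
  qed
qed

lemma mono_steps:
  fixes s :: "nat \<Rightarrow> int"
  assumes "\<forall>m. m < t \<longrightarrow> s m \<le> s (Suc m)"
  shows "i \<le> j \<Longrightarrow> j \<le> t \<Longrightarrow> s i \<le> s j"
proof (induction j)
  case 0 then show ?case by simp
next
  case (Suc j)
  show ?case
  proof (cases "i = Suc j")
    case True then show ?thesis by simp
  next
    case False
    then have "s i \<le> s j" using Suc by simp
    also have "s j \<le> s (Suc j)" using assms Suc.prems by simp
    finally show ?thesis .
  qed
qed

lemma anti_steps:
  fixes s :: "nat \<Rightarrow> int"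
  assumes "\<forall>m. t \<le> m \<and> m < k \<longrightarrow> s (Suc m) \<le> s m"
  shows "t \<le> i \<Longrightarrow> i \<le> j \<Longrightarrow> j \<le> k \<Longrightarrow> s j \<le> s i"
proof (induction j)
  case 0 then show ?case by simp
next
  case (Suc j)
  show ?case
  proof (cases "i = Suc j")
    case True then show ?thesis by simp
  next
    case False
    then have "s j \<le> s i" using Suc by simp
    moreover have "s (Suc j) \<le> s j" using assms Suc.prems False by simp
    ultimately show ?thesis by simp
  qed
qed

lemma concave_unimodal_int:
  fixes s :: "nat \<Rightarrow> int"
  assumes cc: "\<forall>i. i + 2 \<le> k \<longrightarrow> s i + s (i + 2) \<le> 2 * s (i + 1)"
  shows "unimodal s k"
proof -
  define D where "D i = s (Suc i) - s i" for i
  have Dmono: "D j \<le> D i" if "i \<le> j" "j + 1 \<le> k" for i j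
    using that
  proof (induction j)
    case 0 then show ?case by simp
  next
    case (Suc j)
    show ?case
    proof (cases "i = Suc j")
      case True then show ?thesis by simp
    next
      case False
      then have "D j \<le> D i" using Suc by simp
      moreover have "D (Suc j) \<le> D j" using cc[rule_format, of j] Suc.prems
        by (simp add: D_def numeral_2_eq_2)
      ultimately show ?thesis by simp
    qed
  qed
  define Q where "Q t \<longleftrightarrow> t = k \<or> (t < k \<and> s (Suc t) < s t)" for t
  define t where "t = (LEAST t. Q t)"
  have Qt: "Q t" unfolding t_def by (rule LeastI[of Q k]) (simp add: Q_def)
  have tk: "t \<le> k" unfolding t_def by (rule Least_le) (simp add: Q_def)
  have up: "\<forall>m. m < t \<longrightarrow> s m \<le> s (Suc m)"
  proof (intro allI impI)
    fix m assume "m < t"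
    then have "\<not> Q m" unfolding t_def using not_less_Least by blast
    then show "s m \<le> s (Suc m)" using \<open>m < t\<close> tk by (simp add: Q_def)
  qed
  have down: "\<forall>m. t \<le> m \<and> m < k \<longrightarrow> s (Suc m) \<le> s m"
  proof (intro allI impI)
    fix m assume m: "t \<le> m \<and> m < k"
    then have "t < k" by simp
    then have "D t < 0" using Qt by (simp add: Q_def D_def)
    moreover have "D m \<le> D t" using Dmono[of t m] m by simp
    ultimately show "s (Suc m) \<le> s m" by (simp add: D_def)
  qed
  show ?thesis unfolding unimodal_def
    using tk mono_steps[OF up] anti_steps[OF down] by blast
qed

lemma unimodal_nat_int: "unimodal (s :: nat \<Rightarrow> nat) k \<longleftrightarrow> unimodal (\<lambda>i. int (s i)) k"
  by (simp add: unimodal_def)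

lemma inv_unimodal_nat_int: "inv_unimodal (s :: nat \<Rightarrow> nat) k \<longleftrightarrow> unimodal (\<lambda>i. - int (s i)) k"
  by (simp add: unimodal_def inv_unimodal_def)

lemma concave_unimodal:
  fixes s :: "nat \<Rightarrow> nat"
  assumes "\<forall>i. i + 2 \<le> k \<longrightarrow> int (s i) + int (s (i + 2)) \<le> 2 * int (s (i + 1))"
  shows "unimodal s k"
  unfolding unimodal_nat_int by (rule concave_unimodal_int) (use assms in simp)

lemma convex_inv_unimodal:
  fixes s :: "nat \<Rightarrow> nat"
  assumes "\<forall>i. i + 2 \<le> k \<longrightarrow> int (s i) + int (s (i + 2)) \<ge> 2 * int (s (i + 1))"
  shows "inv_unimodal s k"
  unfolding inv_unimodal_nat_int
proof (rule concave_unimodal_int, intro allI impI)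
  fix i assume "i + 2 \<le> k"
  then have "int (s i) + int (s (i + 2)) \<ge> 2 * int (s (i + 1))" using assms by blast
  then show "- int (s i) + - int (s (i + 2)) \<le> 2 * - int (s (i + 1))" by linarith
qed

locale ipath =
  fixes V :: "'a set" and E :: "'a \<Rightarrow> 'a \<Rightarrow> bool" and w :: "nat \<Rightarrow> 'a" and k :: nat
  assumes sg: "simple_graph V E"
    and cn: "graph_connected V E"
    and k2: "k \<ge> 2"
    and wV0: "\<forall>i\<le>k. w i \<in> V"
    and winj0: "inj_on w {0..k}"
    and wE: "\<forall>i<k. E (w i) (w (i + 1))"
    and deg: "\<forall>i\<in>{1..k-1}. degree V E (w i) = 2"
begin

abbreviation "I \<equiv> w ` {1..k-1}"
abbreviation "EH \<equiv> del_vertices_edges E I"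
abbreviation "d \<equiv> gdist V E"

lemma wV: "i \<le> k \<Longrightarrow> w i \<in> V" using wV0 by simp

lemma winj: "i \<le> k \<Longrightarrow> j \<le> k \<Longrightarrow> w i = w j \<longleftrightarrow> i = j"
  using winj0 by (auto simp: inj_on_def)

lemma esym: "E x y \<Longrightarrow> E y x" using sg_sym[OF sg] .
lemma eV: "E x y \<Longrightarrow> x \<in> V \<and> y \<in> V" using sg_V[OF sg] .

lemma edge: "i < k \<Longrightarrow> E (w i) (w (Suc i))" using wE by simp

lemma inI: "j \<le> k \<Longrightarrow> w j \<in> I \<longleftrightarrow> 1 \<le> j \<and> j \<le> k - 1"
proof
  assume j: "j \<le> k" and "w j \<in> I"
  then obtain m where m: "m \<in> {1..k-1}" "w j = w m" by auto
  have "m \<le> k" using m(1) by auto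
  then have "j = m" using winj[OF j, of m] m(2) by simp
  then show "1 \<le> j \<and> j \<le> k - 1" using m by simp
qed auto

lemma nbrs:
  assumes "1 \<le> j" "j \<le> k - 1"
  shows "{y\<in>V. E (w j) y} = {w (j - 1), w (j + 1)}"
proof -
  let ?A = "{y\<in>V. E (w j) y}"
  have fin: "finite ?A" using sg by (simp add: simple_graph_def)
  have c2: "card ?A = 2" using deg assms by (simp add: degree_def)
  have a: "w (j - 1) \<in> ?A" using edge[of "j - 1"] assms esym wV[of "j - 1"] by simp
  have b: "w (j + 1) \<in> ?A" using edge[of j] assms wV[of "j + 1"] by simp
  have ne: "w (j - 1) \<noteq> w (j + 1)" using winj[of "j - 1" "j + 1"] assms by simp
  have "{w (j - 1), w (j + 1)} \<subseteq> ?A" using a b by simp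
  moreover have "card {w (j - 1), w (j + 1)} = card ?A" using ne c2 by simp
  ultimately show ?thesis using card_subset_eq[OF fin] by blast
qed

lemma nbr:
  assumes "1 \<le> j" "j \<le> k - 1" "E (w j) y"
  shows "y = w (j - 1) \<or> y = w (j + 1)"
proof -
  have "y \<in> {y\<in>V. E (w j) y}" using assms(3) eV by simp
  then show ?thesis using nbrs[OF assms(1,2)] by simp
qed

lemma dedge: "E x y \<Longrightarrow> d x y \<le> 1" using gdist_edge[OF sg] .

lemma dlip: "E a b \<Longrightarrow> x \<in> V \<Longrightarrow> d x a \<le> d x b + 1"
proof -
  assume e: "E a b" "x \<in> V"
  have "d x a \<le> d x b + d b a" using gdist_tri[OF cn e(2)] eV[OF e(1)] by simp
  then show ?thesis using dedge[OF esym[OF e(1)]] by simp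
qed

lemma dlip_src: "E a b \<Longrightarrow> x \<in> V \<Longrightarrow> d a x \<le> d b x + 1"
proof -
  assume e: "E a b" "x \<in> V"
  have "d a x \<le> d a b + d b x" using gdist_tri[OF cn _ _ e(2)] eV[OF e(1)] by simp
  then show ?thesis using dedge[OF e(1)] by simp
qed

lemma dstep:
  assumes i: "i + 2 \<le> k" and y: "y \<in> V" "y \<noteq> w (i + 1)"
  shows "d (w (i + 1)) y = 1 + min (d (w i) y) (d (w (i + 2)) y)"
proof -
  have cV: "w (i + 1) \<in> V" using wV i by simp
  obtain z where z: "E (w (i + 1)) z" "d (w (i + 1)) y = d z y + 1"
    using gdist_step[OF sg cn cV y(1) y(2)[symmetric]] by blast
  have "z = w i \<or> z = w (i + 2)" using nbr[of "i + 1" z] z(1) i by simp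
  moreover have "d (w (i + 1)) y \<le> d (w i) y + 1"
    using dlip_src[OF esym[OF edge[of i]], of y] i y by simp
  moreover have "d (w (i + 1)) y \<le> d (w (i + 2)) y + 1"
    using dlip_src[OF edge[of "i + 1"], of y] i y by (simp add: numeral_2_eq_2)
  ultimately show ?thesis using z(2) by auto
qed

end

context ipath begin

lemma EH_sym: "\<forall>x y. EH x y \<longrightarrow> EH y x"
  by (auto simp: del_vertices_edges_def esym)

lemma uH: "w 0 \<in> V - I" using wV[of 0] inI[of 0] by simp
lemma vH: "w k \<in> V - I" using wV[of k] inI[of k] k2 by simp

lemma Hc_iff: "graph_connected (V - I) EH \<longleftrightarrow> reachable (V - I) EH (w 0) (w k)"
proof
  assume "graph_connected (V - I) EH"
  then show "reachable (V - I) EH (w 0) (w k)" using uH vH by (simp add: graph_connected_def)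
next
  assume uv: "reachable (V - I) EH (w 0) (w k)"
  define R where "R z \<longleftrightarrow> z \<in> I \<or> (z \<in> V - I \<and> (reachable (V - I) EH (w 0) z \<or> reachable (V - I) EH (w k) z))" for z
  have cl: "R b" if "R a" "E a b" for a b
  proof (cases "b \<in> I")
    case True then show ?thesis by (simp add: R_def)
  next
    case bI: False
    have bV: "b \<in> V" using eV[OF that(2)] by simp
    show ?thesis
    proof (cases "a \<in> I")
      case True
      then obtain j where j: "1 \<le> j" "j \<le> k - 1" "a = w j" by auto
      have "b = w (j - 1) \<or> b = w (j + 1)" using nbr[OF j(1,2)] that(2) j(3) by simp
      then show ?thesis
      proof
        assume b: "b = w (j - 1)"
        then have "\<not> (1 \<le> j - 1 \<and> j - 1 \<le> k - 1)" using inI[of "j - 1"] bI j by simp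
        then have "j - 1 = 0" using j by arith
        then have "b = w 0" using b by simp
        then show ?thesis using uH reach_refl[of "w 0" "V - I" EH] by (simp add: R_def)
      next
        assume b: "b = w (j + 1)"
        then have "\<not> (1 \<le> j + 1 \<and> j + 1 \<le> k - 1)" using inI[of "j + 1"] bI j by simp
        then have "j + 1 = k" using j k2 by simp
        then have "b = w k" using b by simp
        then show ?thesis using vH reach_refl[of "w k" "V - I" EH] by (simp add: R_def)
      qed
    next
      case False
      then have ra: "reachable (V - I) EH (w 0) a \<or> reachable (V - I) EH (w k) a"
        using that(1) by (simp add: R_def)
      have "EH a b" using that(2) False bI by (simp add: del_vertices_edges_def)
      then show ?thesis using ra reach_step[of "V - I" EH _ a b] bV bI by (auto simp: R_def)
    qed
  qed
  have all: "reachable (V - I) EH (w 0) x \<or> reachable (V - I) EH (w k) x" if x: "x \<in> V - I" for x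
  proof -
    obtain xs where xs: "is_walk V E xs" "hd xs = w 0" "last xs = x"
      using conn_reach[OF cn _ , of "w 0" x] wV[of 0] x unfolding reachable_def by auto
    have "R (hd xs)" using xs(2) uH reach_refl[of "w 0" "V - I" EH] by (simp add: R_def)
    then have "R (last xs)" using walk_prop[OF xs(1), of R] cl by blast
    then show ?thesis using xs(3) x by (simp add: R_def)
  qed
  have vu: "reachable (V - I) EH (w k) (w 0)" using reach_sym[OF EH_sym uv] .
  show "graph_connected (V - I) EH" unfolding graph_connected_def
  proof (intro conjI ballI)
    show "V - I \<noteq> {}" using uH by blast
  next
    fix x y assume x: "x \<in> V - I" and y: "y \<in> V - I"
    have ux: "reachable (V - I) EH (w 0) x" using all[OF x] uv reach_trans by metis
    have uy: "reachable (V - I) EH (w 0) y" using all[OF y] uv reach_trans by metis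
    show "reachable (V - I) EH x y" using reach_trans[OF reach_sym[OF EH_sym ux] uy] .
  qed
qed

lemma wreach: "a \<le> k \<Longrightarrow> b \<le> k \<Longrightarrow> reachable V E (w a) (w b)"
  using conn_reach[OF cn] wV by simp

lemma c_facts:
  assumes i: "i + 2 \<le> k"
  shows "d (w i) (w (i + 1)) = 1" "d (w (i + 1)) (w (i + 2)) = 1" "d (w (i+1)) (w (i+1)) = 0"
    "w (i + 1) \<in> I" "w i \<noteq> w (i + 1)" "w (i + 2) \<noteq> w (i + 1)" "w i \<noteq> w (i + 2)"
proof -
  show ne1: "w i \<noteq> w (i + 1)" using winj[of i "i + 1"] i by simp
  show ne2: "w (i + 2) \<noteq> w (i + 1)" using winj[of "i + 2" "i + 1"] i by simp
  show "w i \<noteq> w (i + 2)" using winj[of i "i + 2"] i by simp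
  have a1: "d (w i) (w (i + 1)) \<le> 1" using dedge[OF edge[of i]] i by (simp only: Suc_eq_plus1)
  have a2: "d (w i) (w (i + 1)) \<ge> 1" using gdist_pos[OF wreach ne1] i by simp
  show "d (w i) (w (i + 1)) = 1" using a1 a2 by linarith
  have b1: "d (w (i + 1)) (w (i + 2)) \<le> 1" using dedge[OF edge[of "i + 1"]] i
    by (simp only: Suc_eq_plus1 add.assoc one_add_one)
  have b2: "d (w (i + 1)) (w (i + 2)) \<ge> 1" using gdist_pos[OF wreach ne2[symmetric]] i by simp
  show "d (w (i + 1)) (w (i + 2)) = 1" using b1 b2 by linarith
  show "d (w (i+1)) (w (i+1)) = 0" using gdist_refl[OF wV[of "i+1"]] i by simp
  show "w (i + 1) \<in> I" using inI[of "i + 1"] i by simp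
qed

lemma sum_identity:
  assumes i: "i + 2 \<le> k"
  shows "int (transmission V E (w i)) + int (transmission V E (w (i + 2))) - 2 * int (transmission V E (w (i + 1)))
     = 2 + (\<Sum>y\<in>V - {w (i + 1)}. \<bar>int (d (w i) y) - int (d (w (i + 2)) y)\<bar> - 2)"
proof -
  let ?c = "w (i + 1)"
  let ?h = "\<lambda>y. int (d (w i) y) + int (d (w (i + 2)) y) - 2 * int (d ?c y)"
  have fin: "finite V" using sg by (simp add: simple_graph_def)
  have cV: "?c \<in> V" using wV i by simp
  have "int (transmission V E (w i)) + int (transmission V E (w (i + 2))) - 2 * int (transmission V E ?c)
      = (\<Sum>y\<in>V. ?h y)"
    by (simp add: transmission_def of_nat_sum sum.distrib sum_subtractf sum_distrib_left)
  also have "\<dots> = ?h ?c + (\<Sum>y\<in>V - {?c}. ?h y)" using sum.remove[OF fin cV] by simp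
  also have "?h ?c = 2"
  proof -
    have "d (w (i + 2)) ?c = 1" using c_facts(2)[OF i] gdist_sym[OF sg cn] wV i by simp
    then show ?thesis using c_facts(1,3)[OF i] by simp
  qed
  also have "(\<Sum>y\<in>V - {?c}. ?h y) = (\<Sum>y\<in>V - {?c}. \<bar>int (d (w i) y) - int (d (w (i + 2)) y)\<bar> - 2)"
  proof (rule sum.cong)
    fix y assume y: "y \<in> V - {?c}"
    then have "d ?c y = 1 + min (d (w i) y) (d (w (i + 2)) y)" using dstep[OF i] by simp
    then show "?h y = \<bar>int (d (w i) y) - int (d (w (i + 2)) y)\<bar> - 2" by (simp add: min_def abs_if)
  qed simp
  finally show ?thesis .
qed

end

context ipath begin

lemma disc_case:
  assumes nr: "\<not> reachable (V - I) EH (w 0) (w k)" and i: "i + 2 \<le> k"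
  shows "int (transmission V E (w i)) + int (transmission V E (w (i + 2))) \<ge> 2 * int (transmission V E (w (i + 1)))"
proof -
  let ?c = "w (i + 1)"
  define Lft where "Lft x \<longleftrightarrow> (\<exists>j\<le>i. x = w j) \<or> (x \<in> V - I \<and> reachable (V - I) EH (w 0) x)" for x
  have clB: "Lft y" if x: "x \<in> V - I" "reachable (V - I) EH (w 0) x" and e: "E x y" and yc: "y \<noteq> ?c" for x y
  proof (cases "y \<in> I")
    case False
    have "EH x y" using e x(1) False by (simp add: del_vertices_edges_def)
    then have "reachable (V - I) EH (w 0) y" using reach_step[OF x(2)] eV[OF e] False by simp
    then show ?thesis using eV[OF e] False by (simp add: Lft_def)
  next
    case True
    then obtain l where l: "1 \<le> l" "l \<le> k - 1" "y = w l" by auto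
    have "x = w (l - 1) \<or> x = w (l + 1)" using nbr[OF l(1,2)] esym[OF e] l(3) by simp
    then show ?thesis
    proof
      assume xl: "x = w (l - 1)"
      then have "\<not> (1 \<le> l - 1 \<and> l - 1 \<le> k - 1)" using inI[of "l - 1"] x(1) l by simp
      then have "l = 1" using l by arith
      show ?thesis
      proof (cases "1 \<le> i")
        case True then show ?thesis using \<open>l = 1\<close> l(3) unfolding Lft_def by blast
      next
        case False then have "i = 0" by simp
        then show ?thesis using \<open>l = 1\<close> l(3) yc by simp
      qed
    next
      assume xl: "x = w (l + 1)"
      then have "\<not> (1 \<le> l + 1 \<and> l + 1 \<le> k - 1)" using inI[of "l + 1"] x(1) l by simp
      then have "l + 1 = k" using l k2 by arith
      then show ?thesis using xl x(2) nr by simp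
    qed
  qed
  have cl: "Lft y" if Lx: "Lft x" and e: "E x y" and yc: "y \<noteq> ?c" for x y
  proof -
    consider (A) j where "j \<le> i" "x = w j" | (B) "x \<in> V - I" "reachable (V - I) EH (w 0) x"
      using Lx by (auto simp: Lft_def)
    then show ?thesis
    proof cases
      case (A j)
      show ?thesis
      proof (cases "j = 0")
        case True
        then show ?thesis using clB[OF uH reach_refl[OF uH] _ yc] e A by simp
      next
        case False
        then have "y = w (j - 1) \<or> y = w (j + 1)" using nbr[of j y] A i e by simp
        then show ?thesis
        proof
          assume "y = w (j - 1)"
          moreover have "j - 1 \<le> i" using A by simp
          ultimately show ?thesis unfolding Lft_def by blast
        next
          assume y: "y = w (j + 1)"
          show ?thesis
          proof (cases "j + 1 \<le> i")
            case True then show ?thesis using y unfolding Lft_def by blast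
          next
            case False then have "j = i" using A by simp
            then show ?thesis using y yc by simp
          qed
        qed
      qed
    next
      case B then show ?thesis using clB[OF B _ yc] e by simp
    qed
  qed
  have nL: "\<not> Lft (w (i + 2))"
  proof
    assume "Lft (w (i + 2))"
    then consider (A) j where "j \<le> i" "w (i + 2) = w j" | (B) "w (i + 2) \<in> V - I" "reachable (V - I) EH (w 0) (w (i + 2))"
      by (auto simp: Lft_def)
    then show False
    proof cases
      case (A j) then show False using winj[of "i + 2" j] i by simp
    next
      case B
      then have "\<not> (1 \<le> i + 2 \<and> i + 2 \<le> k - 1)" using inI[of "i + 2"] i by simp
      then have "i + 2 = k" using i by arith
      then show False using B nr by simp
    qed
  qed
  have cV: "?c \<in> V" using wV i by simp
  have wiV: "w i \<in> V" and w2V: "w (i + 2) \<in> V" using wV i by auto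
  have big: "\<bar>int (d (w i) y) - int (d (w (i + 2)) y)\<bar> \<ge> 2" if y: "y \<in> V - {?c}" for y
  proof (rule ccontr)
    assume "\<not> ?thesis"
    then have ab: "d (w i) y \<le> d (w (i + 2)) y + 1" "d (w (i + 2)) y \<le> d (w i) y + 1" by auto
    have m: "d ?c y = 1 + min (d (w i) y) (d (w (i + 2)) y)" using dstep[OF i] y by simp
    have Ly: "Lft y"
    proof (rule propagate[OF sg cn wiV cV _ cl])
      show "Lft (w i)" by (auto simp: Lft_def)
      show "y \<in> V" using y by simp
      show "d (w i) ?c + d ?c y > d (w i) y" using c_facts(1)[OF i] m ab by simp
    qed
    have "Lft (w (i + 2))"
    proof (rule propagate[where a=y and c="w (i + 1)" and P=Lft and t="w (i + 2)", OF sg cn _ cV Ly cl])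
      show "y \<in> V" using y by simp
      show "w (i + 2) \<in> V" using w2V .
      have "d y ?c = d ?c y" using gdist_sym[OF sg cn] y cV by simp
      moreover have "d y (w (i + 2)) = d (w (i + 2)) y" using gdist_sym[OF sg cn] y w2V by simp
      ultimately show "d y ?c + d ?c (w (i + 2)) > d y (w (i + 2))" using m ab c_facts(2)[OF i] by (auto simp: min_def)
    qed
    then show False using nL by simp
  qed
  have "(\<Sum>y\<in>V - {?c}. \<bar>int (d (w i) y) - int (d (w (i + 2)) y)\<bar> - 2) \<ge> 0"
    using big by (intro sum_nonneg) simp
  then show ?thesis using sum_identity[OF i] by linarith
qed

end

context ipath begin

lemma conn_case:
  assumes r: "reachable (V - I) EH (w 0) (w k)" and i: "i + 2 \<le> k"
  shows "int (transmission V E (w i)) + int (transmission V E (w (i + 2))) \<le> 2 * int (transmission V E (w (i + 1)))"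
proof -
  let ?c = "w (i + 1)"
  define g where "g y = int (d (w (i + 2)) y) - int (d (w i) y)" for y
  have cV: "?c \<in> V" using wV i by simp
  have wiV: "w i \<in> V" and w2V: "w (i + 2) \<in> V" using wV i by auto
  have d02: "d (w i) (w (i + 2)) \<le> 2"
    using gdist_tri[OF cn wiV cV w2V] c_facts(1,2)[OF i] by simp
  have d20: "d (w (i + 2)) (w i) \<le> 2" using d02 gdist_sym[OF sg cn wiV w2V] by simp
  have gb: "\<bar>g y\<bar> \<le> 2" if y: "y \<in> V" for y
  proof -
    have "d (w i) y \<le> d (w i) (w (i + 2)) + d (w (i + 2)) y" using gdist_tri[OF cn wiV w2V y] .
    moreover have "d (w (i + 2)) y \<le> d (w (i + 2)) (w i) + d (w i) y" using gdist_tri[OF cn w2V wiV y] .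
    ultimately show ?thesis using d02 d20 by (simp add: g_def)
  qed
  have claim: "(\<exists>y\<in>V - {?c}. g y = 0) \<or>
      (\<exists>y1\<in>V - {?c}. \<exists>y2\<in>V - {?c}. y1 \<noteq> y2 \<and> \<bar>g y1\<bar> = 1 \<and> \<bar>g y2\<bar> = 1)"
  proof (rule ccontr)
    assume neg: "\<not> ?thesis"
    define P where "P z \<longleftrightarrow> z \<in> V \<and> z \<noteq> ?c \<and> g z > 0" for z
    have clP: "P y" if Px: "P x" and e: "E x y" and yc: "y \<noteq> ?c" for x y
    proof -
      have yV: "y \<in> V" using eV[OF e] by simp
      have g0: "g y \<noteq> 0" using neg yV yc by auto
      have l1: "d (w i) y \<le> d (w i) x + 1" using dlip[OF esym[OF e] wiV] .
      have l2: "d (w (i + 2)) x \<le> d (w (i + 2)) y + 1" using dlip[OF e w2V] .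
      have "g x - g y \<le> 2" using l1 l2 by (simp add: g_def)
      show ?thesis
      proof (rule ccontr)
        assume "\<not> P y"
        then have "g y < 0" using yV yc g0 by (auto simp: P_def)
        then have "g x = 1" "g y = -1" using \<open>g x - g y \<le> 2\<close> Px by (auto simp: P_def)
        moreover have "x \<noteq> y" using e sg_irr[OF sg] by auto
        moreover have "x \<in> V - {?c}" "y \<in> V - {?c}" using Px yV yc by (auto simp: P_def)
        ultimately show False using neg by force
      qed
    qed
    have Pi: "P (w i)"
    proof -
      have "d (w (i + 2)) (w i) \<ge> 1" using gdist_pos[OF wreach c_facts(7)[OF i, symmetric]] i by simp
      then show ?thesis using wiV c_facts(5)[OF i] gdist_refl[OF wiV] by (simp add: P_def g_def)
    qed
    have down: "P (w (i - m))" if "m \<le> i" for m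
      using that
    proof (induction m)
      case 0 then show ?case using Pi by simp
    next
      case (Suc m)
      have P1: "P (w (i - m))" using Suc by simp
      have e: "E (w (i - Suc m)) (w (Suc (i - Suc m)))" using edge[of "i - Suc m"] Suc.prems i by simp
      have eq: "Suc (i - Suc m) = i - m" using Suc.prems by simp
      have ne: "w (i - Suc m) \<noteq> ?c" using winj[of "i - Suc m" "i + 1"] i by simp
      show ?case using clP[OF P1 _ ne] esym e eq by simp
    qed
    have P0: "P (w 0)" using down[of i] by simp
    obtain xs where xs: "is_walk (V - I) EH xs" "hd xs = w 0" "last xs = w k"
      using r unfolding reachable_def by blast
    have "P (last xs)"
    proof (rule walk_prop[OF xs(1)])
      show "P (hd xs)" using P0 xs(2) by simp
      show "\<forall>a b. P a \<longrightarrow> EH a b \<longrightarrow> b \<in> set xs \<longrightarrow> P b"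
      proof (intro allI impI)
        fix a b assume Pa: "P a" and e: "EH a b" and b: "b \<in> set xs"
        have "b \<in> V - I" using walk_set[OF xs(1)] b by auto
        then have "b \<noteq> ?c" using c_facts(4)[OF i] by auto
        then show "P b" using clP[OF Pa _ ] e by (simp add: del_vertices_edges_def)
      qed
    qed
    then have Pk: "P (w k)" using xs(3) by simp
    have up: "P (w (k - m))" if "i + 2 + m \<le> k" for m
      using that
    proof (induction m)
      case 0 then show ?case using Pk by simp
    next
      case (Suc m)
      have P1: "P (w (k - m))" using Suc by simp
      have e: "E (w (k - Suc m)) (w (Suc (k - Suc m)))" using edge[of "k - Suc m"] Suc.prems by simp
      have eq: "Suc (k - Suc m) = k - m" using Suc.prems by simp
      have ne: "w (k - Suc m) \<noteq> ?c" using winj[of "k - Suc m" "i + 1"] Suc.prems by simp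
      show ?case using clP[OF P1 _ ne] esym e eq by simp
    qed
    have "P (w (i + 2))" using up[of "k - (i + 2)"] i by simp
    moreover have "d (w i) (w (i + 2)) \<ge> 1" using gdist_pos[OF wreach c_facts(7)[OF i]] i by simp
    ultimately show False using gdist_refl[OF w2V] by (simp add: P_def g_def)
  qed
  define f where "f y = 2 - \<bar>int (d (w i) y) - int (d (w (i + 2)) y)\<bar>" for y
  have fg: "f y = 2 - \<bar>g y\<bar>" for y unfolding f_def g_def by simp
  have fnn: "\<forall>y\<in>V - {?c}. f y \<ge> 0" using gb fg by simp
  have fin: "finite (V - {?c})" using sg by (simp add: simple_graph_def)
  have sf: "(\<Sum>y\<in>V - {?c}. f y) \<ge> 2"
    using claim
  proof
    assume "\<exists>y\<in>V - {?c}. g y = 0"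
    then obtain y where y: "y \<in> V - {?c}" "g y = 0" by blast
    have "f y \<le> (\<Sum>y\<in>V - {?c}. f y)" using member_le_sum[OF y(1) _ fin, of f] fnn by blast
    then show ?thesis using y fg by simp
  next
    assume "\<exists>y1\<in>V - {?c}. \<exists>y2\<in>V - {?c}. y1 \<noteq> y2 \<and> \<bar>g y1\<bar> = 1 \<and> \<bar>g y2\<bar> = 1"
    then obtain y1 y2 where y: "y1 \<in> V - {?c}" "y2 \<in> V - {?c}" "y1 \<noteq> y2" "\<bar>g y1\<bar> = 1" "\<bar>g y2\<bar> = 1"
      by blast
    have "(\<Sum>y\<in>{y1, y2}. f y) \<le> (\<Sum>y\<in>V - {?c}. f y)"
      using sum_mono2[OF fin, of "{y1, y2}" f] y fnn by auto
    moreover have "(\<Sum>y\<in>{y1, y2}. f y) = 2" using y fg by simp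
    ultimately show ?thesis by simp
  qed
  have "(\<Sum>y\<in>V - {?c}. \<bar>int (d (w i) y) - int (d (w (i + 2)) y)\<bar> - 2) = - (\<Sum>y\<in>V - {?c}. f y)"
    unfolding f_def by (simp add: sum_negf[symmetric])
  then show ?thesis using sum_identity[OF i] sf by linarith
qed

end

theorem theorem1:
  fixes V :: "'a set" and E :: "'a \<Rightarrow> 'a \<Rightarrow> bool" and w :: "nat \<Rightarrow> 'a" and k :: nat
  assumes "simple_graph V E"
    and "graph_connected V E"
    and "k \<ge> 2"
    and "\<forall>i\<le>k. w i \<in> V"
    and "inj_on w {0..k}"
    and "\<forall>i<k. E (w i) (w (i + 1))"
    and "\<forall>i\<in>{1..k-1}. degree V E (w i) = 2"
  shows "(graph_connected (V - w ` {1..k-1}) (del_vertices_edges E (w ` {1..k-1}))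
            \<longrightarrow> unimodal (\<lambda>i. transmission V E (w i)) k)
       \<and> (\<not> graph_connected (V - w ` {1..k-1}) (del_vertices_edges E (w ` {1..k-1}))
            \<longrightarrow> inv_unimodal (\<lambda>i. transmission V E (w i)) k)"
proof -
  interpret ipath V E w k using assms by unfold_locales
  show ?thesis
  proof (intro conjI impI)
    assume "graph_connected (V - w ` {1..k-1}) (del_vertices_edges E (w ` {1..k-1}))"
    then have r: "reachable (V - I) EH (w 0) (w k)" using Hc_iff by simp
    show "unimodal (\<lambda>i. transmission V E (w i)) k"
      by (rule concave_unimodal) (use conn_case[OF r] in simp)
  next
    assume "\<not> graph_connected (V - w ` {1..k-1}) (del_vertices_edges E (w ` {1..k-1}))"
    then have r: "\<not> reachable (V - I) EH (w 0) (w k)" using Hc_iff by simp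
    show "inv_unimodal (\<lambda>i. transmission V E (w i)) k"
      by (rule convex_inv_unimodal) (use disc_case[OF r] in simp)
  qed
qed

end
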